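(* Let $q$ be a prime power, let $1\le k\le m$ be integers, and let $C\subseteq\mathbb{F}_{q^m}^k$ be an $\mathbb{F}_{q^m}$-linear code of dimension $1\le t\le k$ over $\mathbb{F}_{q^m}$. Fix an integer $1\le\mu\le k$. The following are equivalent: (1) $\Delta_\mu(C)>\Delta_{\mu-1}(C)$; (2) there exists $1\le r\le t$ with $m_r(C)=\mu$.
   Context: A subspace $V\subseteq\mathbb{F}_{q^m}^k$ is Frobenius-closed if $(v_1^q,\dots,v_k^q)\in V$ whenever $v\in V$; $\Lambda_q(k,m)$ is the set of Frobenius-closed $\mathbb{F}_{q^m}$-subspaces. For $0\le\mu\le k$, $\Delta_\mu(C):=\max\{\dim_{\mathbb{F}_{q^m}}(V\cap C): V\in\Lambda_q(k,m),\ \dim_{\mathbb{F}_{q^m}}(V)=\mu\}$. The $r$-th generalized rank weight is $m_r(C):=\min\{\dim_{\mathbb{F}_{q^m}}(V):V\in\Lambda_q(k,m),\ \dim_{\mathbb{F}_{q^m}}(V\cap C)\ge r\}$. *)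

theory Defs
  imports "HOL-Analysis.Analysis" "HOL-Computational_Algebra.Primes"
begin

text \<open>Vectors of F_{q^m}^k are modelled as elements of 'a ^ 'n with CARD('n) = k,
  'a a finite field with CARD('a) = q^m.\<close>

definition prime_power :: "nat \<Rightarrow> bool" where
  "prime_power q \<longleftrightarrow> (\<exists>p e. prime p \<and> e \<ge> 1 \<and> q = p ^ e)"

definition frob :: "nat \<Rightarrow> 'a::field ^ 'n \<Rightarrow> 'a ^ 'n" where
  "frob q v = (\<chi> i. (v $ i) ^ q)"

definition frobenius_closed :: "nat \<Rightarrow> ('a::field ^ 'n) set \<Rightarrow> bool" where
  "frobenius_closed q V \<longleftrightarrow> (\<forall>v\<in>V. frob q v \<in> V)"

definition Lambda_q :: "nat \<Rightarrow> ('a::field ^ 'n) set set" where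
  "Lambda_q q = {V. vec.subspace V \<and> frobenius_closed q V}"

definition Delta :: "nat \<Rightarrow> ('a::field ^ 'n) set \<Rightarrow> nat \<Rightarrow> nat" where
  "Delta q C \<mu> = Max {vec.dim (V \<inter> C) | V. V \<in> Lambda_q q \<and> vec.dim V = \<mu>}"

definition gen_rank_weight :: "nat \<Rightarrow> ('a::field ^ 'n) set \<Rightarrow> nat \<Rightarrow> nat" where
  "gen_rank_weight q C r = (LEAST d. \<exists>V. V \<in> Lambda_q q \<and> vec.dim V = d \<and> vec.dim (V \<inter> C) \<ge> r)"

end

theory Submission
  imports Defs
begin

lemma frob_ext:
  fixes V :: "('a::field ^ 'n) set"
  assumes V: "V \<in> Lambda_q q" and d: "vec.dim V < CARD('n)"
  shows "\<exists>W\<in>Lambda_q q. V \<subseteq> W \<and> vec.dim W = vec.dim V + 1"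
proof -
  have sV: "vec.subspace V" and fV: "\<forall>v\<in>V. frob q v \<in> V"
    using V by (auto simp: Lambda_q_def frobenius_closed_def)
  obtain i where ai: "axis i (1::'a) \<notin> V"
  proof (rule ccontr)
    assume "\<not> thesis"
    with that have all: "\<forall>i. axis i (1::'a) \<in> V" by blast
    have "UNIV \<subseteq> V"
    proof
      fix x :: "'a^'n"
      have "(\<Sum>i\<in>UNIV. x $ i *s axis i 1) \<in> V"
        by (intro vec.subspace_sum[OF sV]) (simp add: vec.subspace_scale[OF sV] all)
      then show "x \<in> V" by (simp add: basis_expansion)
    qed
    then have "V = UNIV" by blast
    with d vec_dim_card show False by (metis less_irrefl)
  qed
  define a where "a = axis i (1::'a)"
  define W where "W = vec.span (insert a V)"
  have spV: "vec.span V = V" using sV vec.span_eq_iff by blast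
  have "vec.subspace W" unfolding W_def by (rule vec.subspace_span)
  moreover have "V \<subseteq> W" unfolding W_def using vec.span_superset by blast
  moreover have "vec.dim W = vec.dim V + 1"
  proof -
    have na: "a \<notin> vec.span V" by (metis spV ai a_def)
    show ?thesis unfolding W_def vec.dim_span vec.dim_insert using na by simp
  qed
  moreover have "\<forall>x\<in>W. frob q x \<in> W"
  proof
    fix x assume "x \<in> W"
    then obtain c where c: "x - c *s a \<in> V" unfolding W_def vec.span_insert spV by blast
    define v where "v = x - c *s a"
    define c' where "c' = (x $ i) ^ q - (v $ i) ^ q"
    have "frob q x - c' *s a = frob q v"
      unfolding vec_eq_iff
    proof
      fix j
      show "(frob q x - c' *s a) $ j = frob q v $ j"
        by (cases "j = i") (auto simp: frob_def c'_def v_def a_def axis_def)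
    qed
    then have "frob q x - c' *s a \<in> V" using fV c v_def by auto
    then show "frob q x \<in> W" unfolding W_def vec.span_insert spV by blast
  qed
  ultimately show ?thesis unfolding Lambda_q_def frobenius_closed_def by blast
qed

lemma exists_dim:
  fixes q :: nat
  assumes q: "q \<ge> 1" and "d \<le> CARD('n)"
  shows "\<exists>V::('a::field ^ 'n) set. V \<in> Lambda_q q \<and> vec.dim V = d"
  using assms(2)
proof (induction d)
  case 0
  have "({0}::('a^'n) set) \<in> Lambda_q q"
    using q by (auto simp: Lambda_q_def frobenius_closed_def frob_def vec.subspace_0 vec_eq_iff
        zero_power)
  moreover have "vec.dim ({0}::('a^'n) set) = 0" by simp
  ultimately show ?case by blast
next
  case (Suc d)
  then obtain V :: "('a^'n) set" where "V \<in> Lambda_q q" "vec.dim V = d" by auto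
  with frob_ext[of V q] Suc.prems show ?case by auto
qed

lemma Delta_props:
  fixes C :: "('a::field ^ 'n) set" and q :: nat
  assumes q: "q \<ge> 1" and d: "d \<le> CARD('n)"
  defines "S \<equiv> {vec.dim (V \<inter> C) | V. V \<in> Lambda_q q \<and> vec.dim V = d}"
  shows "finite S" "S \<noteq> {}" "Delta q C d \<in> S" "\<And>x. x \<in> S \<Longrightarrow> x \<le> Delta q C d"
proof -
  have "S \<subseteq> {0..CARD('n)}" unfolding S_def using dim_subset_UNIV_cart_gen by auto
  then show f: "finite S" using finite_subset by blast
  show ne: "S \<noteq> {}" using exists_dim[OF q d, where 'a='a] unfolding S_def by blast
  have DS: "Delta q C d = Max S" unfolding Delta_def S_def by simp
  show "Delta q C d \<in> S" using DS f ne by simp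
  show "\<And>x. x \<in> S \<Longrightarrow> x \<le> Delta q C d" using DS f by simp
qed

theorem theorem8p2:
  fixes C :: "('a::{finite,field} ^ 'n) set"
    and q m k t \<mu> :: nat
  assumes "prime_power q"
    and "CARD('a) = q ^ m"
    and "1 \<le> k" and "k \<le> m"
    and "CARD('n) = k"
    and "vec.subspace C"
    and "vec.dim C = t"
    and "1 \<le> t" and "t \<le> k"
    and "1 \<le> \<mu>" and "\<mu> \<le> k"
  shows "Delta q C \<mu> > Delta q C (\<mu> - 1) \<longleftrightarrow>
         (\<exists>r. 1 \<le> r \<and> r \<le> t \<and> gen_rank_weight q C r = \<mu>)"
proof -
  have q: "q \<ge> 1" using assms(1) unfolding prime_power_def
    by (metis One_nat_def le_less_linear less_one not_prime_0 power_eq_0_iff prime_gt_0_nat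
        zero_less_power)
  define f where "f d = Delta q C d" for d
  have P: "(\<exists>V. V \<in> Lambda_q q \<and> vec.dim V = d \<and> vec.dim (V \<inter> C) \<ge> r) \<longleftrightarrow>
      d \<le> k \<and> f d \<ge> r" for d r
  proof
    assume "\<exists>V. V \<in> Lambda_q q \<and> vec.dim V = d \<and> vec.dim (V \<inter> C) \<ge> r"
    then obtain V where V: "V \<in> Lambda_q q" "vec.dim V = d" "vec.dim (V \<inter> C) \<ge> r" by blast
    have dk: "d \<le> k" using V(2) dim_subset_UNIV_cart_gen assms(5) by metis
    have "vec.dim (V \<inter> C) \<le> f d" unfolding f_def
      using Delta_props(4)[OF q, where d=d and C=C] dk assms(5) V by blast
    with dk V show "d \<le> k \<and> f d \<ge> r" by simp
  next
    assume "d \<le> k \<and> f d \<ge> r"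
    then show "\<exists>V. V \<in> Lambda_q q \<and> vec.dim V = d \<and> vec.dim (V \<inter> C) \<ge> r"
      using Delta_props(3)[OF q, where d=d and C=C] assms(5) unfolding f_def by force
  qed
  have grw: "gen_rank_weight q C r = (LEAST d. d \<le> k \<and> f d \<ge> r)" for r
    unfolding gen_rank_weight_def P ..
  have ft: "f d \<le> t" if dk: "d \<le> k" for d
  proof -
    obtain V where "V \<in> Lambda_q q" "vec.dim V = d" "f d = vec.dim (V \<inter> C)"
      using Delta_props(3)[OF q, where d=d and C=C] dk assms(5) unfolding f_def by auto
    then show ?thesis using vec.dim_subset[of "V \<inter> C" C] assms(7) by simp
  qed
  have step: "f d \<le> f (Suc d)" if sk: "Suc d \<le> k" for d
  proof -
    obtain V where V: "V \<in> Lambda_q q" "vec.dim V = d" "f d = vec.dim (V \<inter> C)"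
      using Delta_props(3)[OF q, where d=d and C=C] sk assms(5) unfolding f_def by force
    obtain W where W: "W \<in> Lambda_q q" "V \<subseteq> W" "vec.dim W = Suc d"
      using frob_ext[OF V(1)] V(2) sk assms(5) by auto
    have "vec.dim (V \<inter> C) \<le> vec.dim (W \<inter> C)" using W(2) vec.dim_subset by (metis inf_mono order_refl)
    also have "\<dots> \<le> f (Suc d)" unfolding f_def
      using Delta_props(4)[OF q, where d="Suc d" and C=C] that assms(5) W by blast
    finally show ?thesis using V(3) by simp
  qed
  have mono: "f a \<le> f b" if "a \<le> b" "b \<le> k" for a b
    using that
  proof (induction b)
    case 0 then show ?case by simp
  next
    case (Suc b)
    show ?case
    proof (cases "a = Suc b")
      case False
      then have "f a \<le> f b" using Suc by simp
      also have "\<dots> \<le> f (Suc b)" using step Suc.prems by simp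
      finally show ?thesis .
    qed simp
  qed
  show ?thesis
  proof
    assume lt: "Delta q C \<mu> > Delta q C (\<mu> - 1)"
    define r where "r = f \<mu>"
    have "(LEAST d. d \<le> k \<and> f d \<ge> r) = \<mu>"
    proof (rule Least_equality)
      show "\<mu> \<le> k \<and> r \<le> f \<mu>" using assms r_def by simp
    next
      fix y assume y: "y \<le> k \<and> r \<le> f y"
      show "\<mu> \<le> y"
      proof (rule ccontr)
        assume "\<not> \<mu> \<le> y"
        then have "f y \<le> f (\<mu> - 1)" using mono[of y "\<mu> - 1"] assms by simp
        with y lt show False unfolding r_def f_def by simp
      qed
    qed
    moreover have "1 \<le> r" "r \<le> t" using lt ft assms unfolding r_def f_def by auto
    ultimately show "\<exists>r. 1 \<le> r \<and> r \<le> t \<and> gen_rank_weight q C r = \<mu>"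
      using grw by blast
  next
    assume "\<exists>r. 1 \<le> r \<and> r \<le> t \<and> gen_rank_weight q C r = \<mu>"
    then obtain r where r: "1 \<le> r" "r \<le> t" "(LEAST d. d \<le> k \<and> f d \<ge> r) = \<mu>"
      using grw by auto
    have ex: "t \<le> f k"
    proof -
      obtain V :: "('a^'n) set" where "V \<in> Lambda_q q" "vec.dim V = k"
        using exists_dim[OF q, of k] assms(5) by auto
      have "(UNIV::('a^'n) set) \<in> Lambda_q q"
        by (simp add: Lambda_q_def frobenius_closed_def vec.subspace_UNIV)
      moreover have "vec.dim (UNIV::('a^'n) set) = k" using assms(5) vec_dim_card[where 'a='a and 'n='n] by simp
      ultimately show ?thesis
        using Delta_props(4)[OF q, where d=k and C=C] assms unfolding f_def by force
    qed
    have "k \<le> k \<and> f k \<ge> r" using ex r by simp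
    then have "\<mu> \<le> k \<and> f \<mu> \<ge> r" using LeastI[of "\<lambda>d. d \<le> k \<and> f d \<ge> r"] r(3) by metis
    moreover have "\<not> (\<mu> - 1 \<le> k \<and> f (\<mu> - 1) \<ge> r)"
      using not_less_Least[of "\<mu> - 1" "\<lambda>d. d \<le> k \<and> f d \<ge> r"] r(3) assms(10) by simp
    ultimately show "Delta q C \<mu> > Delta q C (\<mu> - 1)" unfolding f_def by auto
  qed
qed

end
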